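(* Suppose every IDR of the system $\mathcal{I}(E,\mathcal{F}(E))$ is of Restricted Case I form, and let $E'\subsetneq E$. Then for any two distinct entities $e_i\neq e_j$ in $E$, exactly one of the following holds or more than one holds: (a) $PS(e_i\mid E')\subseteq PS(e_j\mid E')$, (b) $PS(e_j\mid E')\subseteq PS(e_i\mid E')$, (c) $PS(e_i\mid E')\cap PS(e_j\mid E')=\emptyset$; that is, at least one of (a), (b), (c) holds.
   Context: A system $\mathcal{I}(E,\mathcal{F}(E))$ consists of a finite set $E$ of entities, $n=|E|$, and a set $\mathcal{F}(E)$ of interdependency relations (IDRs). Each entity $e$ has at most one IDR, of the form $e\leftarrow \sum_{i=1}^{m}\prod_{x\in s_i}x$ (a disjunction of conjunctions), where each minterm $s_i$ is a nonempty subset of $E$; it means $e$ is operational only if for at least one minterm all entities of that minterm are operational. Entities without an IDR can only fail initially. Failure dynamics: given an initially failing set $E'\subseteq E$ and a set $H\subseteq E$ of hardened entities (hardened entities never fail), put $F_0=E'\setminus H$ and $F_{t+1}=F_t\cup\{e\in E\setminus H: e \text{ has an IDR and every minterm of it contains an element of } F_t\}$; the final failed set is $F(E',H):=F_{n-1}$. $\mathrm{KillSet}(E'):=F(E',\emptyset)$. Protection set: $PS(H\mid E'):=\mathrm{KillSet}(E')\setminus F(E',H)$, and $PS(e\mid E'):=PS(\{e\}\mid E')$. Restricted Case I: every IDR consists of a single minterm of size one, i.e. has the form $e_i\leftarrow e_j$ with $e_j\in E$. *)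

theory Defs
  imports Main
begin

text \<open>The IDR of an entity e is
  idr e: None means e has no IDR; Some M means e <- sum over minterms s in M of
  prod over x in s of x (M a set of minterms, each a subset of E).\<close>

type_synonym 'a idr_sys = "'a \<Rightarrow> 'a set set option"

definition wf_system :: "'a set \<Rightarrow> 'a idr_sys \<Rightarrow> bool" where
  "wf_system E idr \<longleftrightarrow> finite E \<and>
     (\<forall>e \<in> E. \<forall>M. idr e = Some M \<longrightarrow>
        finite M \<and> M \<noteq> {} \<and> (\<forall>s \<in> M. s \<noteq> {} \<and> finite s \<and> s \<subseteq> E))"

definition restricted_case_I :: "'a set \<Rightarrow> 'a idr_sys \<Rightarrow> bool" where
  "restricted_case_I E idr \<longleftrightarrow>
     (\<forall>e \<in> E. \<forall>M. idr e = Some M \<longrightarrow> (\<exists>x \<in> E. M = {{x}}))"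

definition fail_step :: "'a set \<Rightarrow> 'a idr_sys \<Rightarrow> 'a set \<Rightarrow> 'a set \<Rightarrow> 'a set" where
  "fail_step E idr H Ft = Ft \<union> {e \<in> E - H. \<exists>M. idr e = Some M \<and> (\<forall>s \<in> M. s \<inter> Ft \<noteq> {})}"

fun fail_iter :: "'a set \<Rightarrow> 'a idr_sys \<Rightarrow> 'a set \<Rightarrow> 'a set \<Rightarrow> nat \<Rightarrow> 'a set" where
  "fail_iter E idr E' H 0 = E' - H"
| "fail_iter E idr E' H (Suc t) = fail_step E idr H (fail_iter E idr E' H t)"

definition final_failed :: "'a set \<Rightarrow> 'a idr_sys \<Rightarrow> 'a set \<Rightarrow> 'a set \<Rightarrow> 'a set" where
  "final_failed E idr E' H = fail_iter E idr E' H (card E - 1)"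

definition KillSet :: "'a set \<Rightarrow> 'a idr_sys \<Rightarrow> 'a set \<Rightarrow> 'a set" where
  "KillSet E idr E' = final_failed E idr E' {}"

definition PS :: "'a set \<Rightarrow> 'a idr_sys \<Rightarrow> 'a set \<Rightarrow> 'a set \<Rightarrow> 'a set" where
  "PS E idr H E' = KillSet E idr E' - final_failed E idr E' H"

end

theory Submission
  imports Defs
begin

definition par :: "'a idr_sys \<Rightarrow> 'a \<Rightarrow> 'a" where
  "par idr e = (THE x. idr e = Some {{x}})"

definition hp :: "'a set \<Rightarrow> 'a idr_sys \<Rightarrow> 'a \<Rightarrow> bool" where
  "hp E idr e = (e \<in> E \<and> idr e \<noteq> None)"

definition CC :: "'a set \<Rightarrow> 'a idr_sys \<Rightarrow> 'a set \<Rightarrow> 'a set \<Rightarrow> 'a \<Rightarrow> nat \<Rightarrow> bool" where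
  "CC E idr E' H e k = ((par idr ^^ k) e \<in> E' \<and> (\<forall>i\<le>k. (par idr ^^ i) e \<notin> H)
      \<and> (\<forall>i<k. hp E idr ((par idr ^^ i) e)))"

lemma pw: "(f^^m) ((f^^n) x) = (f^^(m+n)) x"
  by (simp add: funpow_add)

lemma par_eq: "idr e = Some {{x}} \<Longrightarrow> par idr e = x"
  unfolding par_def by auto

lemma step_eq:
  assumes "restricted_case_I E idr"
  shows "fail_step E idr H F = F \<union> {e\<in>E-H. idr e \<noteq> None \<and> par idr e \<in> F}"
proof -
  have "\<And>e. e \<in> E \<Longrightarrow> (\<exists>M. idr e = Some M \<and> (\<forall>s \<in> M. s \<inter> F \<noteq> {}))
           \<longleftrightarrow> (idr e \<noteq> None \<and> par idr e \<in> F)"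
  proof -
    fix e assume e: "e \<in> E"
    show "(\<exists>M. idr e = Some M \<and> (\<forall>s \<in> M. s \<inter> F \<noteq> {})) \<longleftrightarrow> (idr e \<noteq> None \<and> par idr e \<in> F)"
    proof (cases "idr e")
      case None then show ?thesis by simp
    next
      case (Some M)
      then obtain x where "M = {{x}}" using assms e unfolding restricted_case_I_def by blast
      then show ?thesis using Some par_eq[of idr e x] by auto
    qed
  qed
  then show ?thesis unfolding fail_step_def by blast
qed

lemma CC_0: "CC E idr E' H e 0 \<longleftrightarrow> e \<in> E' \<and> e \<notin> H"
  unfolding CC_def by auto

lemma CC_Suc: "CC E idr E' H e (Suc k) \<longleftrightarrow> e \<notin> H \<and> hp E idr e \<and> CC E idr E' H (par idr e) k"
proof -
  have a: "\<And>i. (par idr ^^ Suc i) e = (par idr ^^ i) (par idr e)" by (simp add: funpow_swap1)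
  have b: "\<And>P. (\<forall>i\<le>Suc k. P i) \<longleftrightarrow> P 0 \<and> (\<forall>i\<le>k. P (Suc i))"
    by (metis Suc_le_mono le0 not0_implies_Suc)
  have c: "\<And>P. (\<forall>i<Suc k. P i) \<longleftrightarrow> P 0 \<and> (\<forall>i<k. P (Suc i))"
    by (metis Suc_less_eq zero_less_Suc not0_implies_Suc)
  show ?thesis unfolding CC_def b c a by auto
qed

lemma fi_char:
  assumes "restricted_case_I E idr" "E' \<subseteq> E"
  shows "e \<in> fail_iter E idr E' H t \<longleftrightarrow> (\<exists>k\<le>t. CC E idr E' H e k)"
proof (induction t arbitrary: e)
  case 0
  then show ?case by (simp add: CC_0)
next
  case (Suc t)
  have "e \<in> fail_iter E idr E' H (Suc t) \<longleftrightarrow>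
     e \<in> fail_iter E idr E' H t \<or> (e \<in> E \<and> e \<notin> H \<and> idr e \<noteq> None \<and> par idr e \<in> fail_iter E idr E' H t)"
    using step_eq[OF assms(1)] by auto
  also have "\<dots> \<longleftrightarrow> (\<exists>k\<le>t. CC E idr E' H e k) \<or> (e \<notin> H \<and> hp E idr e \<and> (\<exists>k\<le>t. CC E idr E' H (par idr e) k))"
    by (simp only: Suc.IH hp_def) blast
  also have "\<dots> \<longleftrightarrow> (\<exists>k\<le>Suc t. CC E idr E' H e k)"
  proof
    assume "(\<exists>k\<le>t. CC E idr E' H e k) \<or> (e \<notin> H \<and> hp E idr e \<and> (\<exists>k\<le>t. CC E idr E' H (par idr e) k))"
    then show "\<exists>k\<le>Suc t. CC E idr E' H e k"
    proof
      assume "\<exists>k\<le>t. CC E idr E' H e k"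
      then show ?thesis using le_SucI by blast
    next
      assume a: "e \<notin> H \<and> hp E idr e \<and> (\<exists>k\<le>t. CC E idr E' H (par idr e) k)"
      then obtain k where "k \<le> t" "CC E idr E' H (par idr e) k" by blast
      then have "Suc k \<le> Suc t" "CC E idr E' H e (Suc k)" using a by (simp_all only: CC_Suc Suc_le_mono simp_thms)
      then show ?thesis by blast
    qed
  next
    assume "\<exists>k\<le>Suc t. CC E idr E' H e k"
    then obtain k where k: "k \<le> Suc t" "CC E idr E' H e k" by blast
    show "(\<exists>k\<le>t. CC E idr E' H e k) \<or> (e \<notin> H \<and> hp E idr e \<and> (\<exists>k\<le>t. CC E idr E' H (par idr e) k))"
    proof (cases k)
      case 0 then show ?thesis using k by auto
    next
      case (Suc k')
      then have "k' \<le> t" "e \<notin> H \<and> hp E idr e \<and> CC E idr E' H (par idr e) k'" using k CC_Suc[of E idr E' H e k'] by auto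
      then show ?thesis by blast
    qed
  qed
  finally show ?case .
qed

lemma CC_prefix:
  assumes "CC E idr E' H e k" "m \<le> k" "(par idr ^^ m) e \<in> E'"
  shows "CC E idr E' H e m"
  using assms unfolding CC_def by auto

lemma ff_char:
  assumes "wf_system E idr" "restricted_case_I E idr" "E' \<subseteq> E"
  shows "e \<in> final_failed E idr E' H \<longleftrightarrow> (\<exists>k. CC E idr E' H e k)"
proof
  assume "e \<in> final_failed E idr E' H"
  then show "\<exists>k. CC E idr E' H e k" unfolding final_failed_def using fi_char[OF assms(2,3)] by blast
next
  assume "\<exists>k. CC E idr E' H e k"
  define K where "K = (LEAST k. CC E idr E' H e k)"
  have CK: "CC E idr E' H e K" unfolding K_def using \<open>\<exists>k. _\<close> by (meson LeastI_ex)
  have minK: "\<And>m. m < K \<Longrightarrow> (par idr ^^ m) e \<notin> E'"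
  proof
    fix m assume m: "m < K" "(par idr ^^ m) e \<in> E'"
    then have "CC E idr E' H e m" using CC_prefix[OF CK] by simp
    then have "K \<le> m" unfolding K_def by (rule Least_le)
    then show False using m by simp
  qed
  have inj: "inj_on (\<lambda>i. (par idr ^^ i) e) {0..K}"
  proof (rule inj_onI, rule ccontr)
    fix i j assume ij: "i \<in> {0..K}" "j \<in> {0..K}" "(par idr ^^ i) e = (par idr ^^ j) e" "i \<noteq> j"
    have gen: "\<And>i j. i < j \<Longrightarrow> j \<le> K \<Longrightarrow> (par idr ^^ i) e = (par idr ^^ j) e \<Longrightarrow> False"
    proof -
      fix i j assume a: "i < j" "j \<le> K" "(par idr ^^ i) e = (par idr ^^ j) e"
      have "(par idr ^^ (K - (j - i))) e = (par idr ^^ K) e"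
      proof -
        have "(par idr ^^ K) e = (par idr ^^ (K - j)) ((par idr ^^ j) e)"
          using a by (simp add: pw)
        also have "\<dots> = (par idr ^^ (K - j)) ((par idr ^^ i) e)" using a by simp
        also have "\<dots> = (par idr ^^ (K - j + i)) e"
          by (rule pw)
        finally have "(par idr ^^ K) e = (par idr ^^ (K - j + i)) e" .
        moreover have "K - j + i = K - (j - i)" using a by arith
        ultimately show ?thesis by simp
      qed
      moreover have "(par idr ^^ K) e \<in> E'" using CK unfolding CC_def by blast
      moreover have "K - (j - i) < K" using a by arith
      then have "(par idr ^^ (K - (j - i))) e \<notin> E'" by (rule minK)
      ultimately show False by simp
    qed
    show False
    proof (cases "i < j")
      case True then show False using ij gen by auto
    next
      case False then have "j < i" using ij(4) by simp
      then show False using ij gen[of j i] by auto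
    qed
  qed
  have sub: "(\<lambda>i. (par idr ^^ i) e) ` {0..K} \<subseteq> E"
  proof
    fix x assume "x \<in> (\<lambda>i. (par idr ^^ i) e) ` {0..K}"
    then obtain i where i: "i \<le> K" "x = (par idr ^^ i) e" by auto
    show "x \<in> E"
    proof (cases "i = K")
      case True then show ?thesis using CK assms(3) i unfolding CC_def by auto
    next
      case False then show ?thesis using CK i unfolding CC_def hp_def by auto
    qed
  qed
  have fin: "finite E" using assms(1) by (simp add: wf_system_def)
  have "card {0..K} \<le> card E" using card_inj_on_le[OF inj sub fin] .
  then have "K \<le> card E - 1" by simp
  then have "\<exists>k\<le>card E - 1. CC E idr E' H e k" using CK by blast
  then show "e \<in> final_failed E idr E' H" unfolding final_failed_def
    by (simp only: fi_char[OF assms(2,3)])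
qed

lemma CC_single: "CC E idr E' {a} e k \<longleftrightarrow> CC E idr E' {} e k \<and> (\<forall>i\<le>k. (par idr ^^ i) e \<noteq> a)"
  unfolding CC_def by auto

lemma PS_char:
  assumes "wf_system E idr" "restricted_case_I E idr" "E' \<subseteq> E"
  shows "e \<in> PS E idr {a} E' \<longleftrightarrow> (\<exists>k. CC E idr E' {} e k) \<and>
      (\<forall>k. CC E idr E' {} e k \<longrightarrow> (\<exists>i\<le>k. (par idr ^^ i) e = a))"
  unfolding PS_def KillSet_def Diff_iff ff_char[OF assms] CC_single by blast

lemma main_dir:
  assumes "wf_system E idr" "restricted_case_I E idr" "E' \<subseteq> E"
    and e: "e \<in> PS E idr {a} E'" "e \<in> PS E idr {b} E'"
    and K: "CC E idr E' {} e K" "\<And>m. CC E idr E' {} e m \<Longrightarrow> K \<le> m"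
    and ij: "i \<le> K" "j \<le> K" "(par idr ^^ i) e = a" "(par idr ^^ j) e = b" "i \<le> j"
  shows "PS E idr {a} E' \<subseteq> PS E idr {b} E'"
proof
  fix e' assume e': "e' \<in> PS E idr {a} E'"
  show "e' \<in> PS E idr {b} E'"
    unfolding PS_char[OF assms(1-3)]
  proof (intro conjI allI impI)
    show "\<exists>k. CC E idr E' {} e' k" using e' PS_char[OF assms(1-3)] by blast
  next
    fix k assume k: "CC E idr E' {} e' k"
    then obtain i' where i': "i' \<le> k" "(par idr ^^ i') e' = a"
      using e' PS_char[OF assms(1-3)] by blast
    show "\<exists>i\<le>k. (par idr ^^ i) e' = b"
    proof (cases "i' + (j - i) \<le> k")
      case True
      have "(par idr ^^ (i' + (j - i))) e' = (par idr ^^ (j - i)) a"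
        using i' pw[where f="par idr" and m="j - i" and n=i' and x=e'] by (simp add: add.commute)
      also have "\<dots> = (par idr ^^ (j - i + i)) e" by (simp only: ij(3)[symmetric] pw)
      also have "\<dots> = (par idr ^^ j) e" using ij by simp
      finally show ?thesis using True ij by blast
    next
      case False
      define m where "m = k - i' + i"
      have "m < K" using False ij i' unfolding m_def by linarith
      have "(par idr ^^ m) e = (par idr ^^ (k - i')) ((par idr ^^ i) e)"
        unfolding m_def by (rule pw[symmetric])
      also have "\<dots> = (par idr ^^ (k - i')) a" using ij(3) by simp
      also have "\<dots> = (par idr ^^ (k - i' + i')) e'" by (simp only: i'(2)[symmetric] pw)
      also have "\<dots> = (par idr ^^ k) e'" using i'(1) by simp
      finally have "(par idr ^^ m) e \<in> E'" using k unfolding CC_def by simp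
      then have "CC E idr E' {} e m" using CC_prefix[OF K(1)] \<open>m < K\<close> by simp
      then have "K \<le> m" by (rule K(2))
      then show ?thesis using \<open>m < K\<close> by simp
    qed
  qed
qed

theorem theorem7:
  fixes E :: "'a set" and idr :: "'a idr_sys" and E' :: "'a set" and ei ej :: 'a
  assumes "wf_system E idr"
    and "restricted_case_I E idr"
    and "E' \<subset> E"
    and "ei \<in> E" and "ej \<in> E" and "ei \<noteq> ej"
  shows "PS E idr {ei} E' \<subseteq> PS E idr {ej} E'
       \<or> PS E idr {ej} E' \<subseteq> PS E idr {ei} E'
       \<or> PS E idr {ei} E' \<inter> PS E idr {ej} E' = {}"
proof (cases "PS E idr {ei} E' \<inter> PS E idr {ej} E' = {}")
  case True then show ?thesis by blast
next
  case False
  have sub: "E' \<subseteq> E" using assms(3) by blast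
  obtain e where e: "e \<in> PS E idr {ei} E'" "e \<in> PS E idr {ej} E'" using False by blast
  have ex: "\<exists>k. CC E idr E' {} e k" using e(1) PS_char[OF assms(1,2) sub] by blast
  define K where "K = (LEAST k. CC E idr E' {} e k)"
  have CK: "CC E idr E' {} e K" unfolding K_def using ex by (meson LeastI_ex)
  have minK: "\<And>m. CC E idr E' {} e m \<Longrightarrow> K \<le> m" unfolding K_def by (rule Least_le)
  obtain i where i: "i \<le> K" "(par idr ^^ i) e = ei" using e(1) PS_char[OF assms(1,2) sub] CK by blast
  obtain j where j: "j \<le> K" "(par idr ^^ j) e = ej" using e(2) PS_char[OF assms(1,2) sub] CK by blast
  show ?thesis
  proof (cases "i \<le> j")
    case True
    then show ?thesis using main_dir[OF assms(1,2) sub e CK minK i(1) j(1) i(2) j(2)] by blast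
  next
    case False
    then show ?thesis using main_dir[OF assms(1,2) sub e(2,1) CK minK j(1) i(1) j(2) i(2)] by simp
  qed
qed

end
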